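(* For distinct $i,j\in\{1,2,3\}$, the element $y_i+y_j$ is perfect in $D^{2,2,2}$.
   Context: $D^{2,2,2}$ is the modular lattice generated by $x_1,y_1,x_2,y_2,x_3,y_3$ subject only to $x_i\subseteq y_i$ ($i=1,2,3$), with a greatest element $I$ adjoined. Join is written $a+b$. A representation $\rho$ of $D^{2,2,2}$ in a finite-dimensional vector space $X$ (over a field) is a lattice morphism from $D^{2,2,2}$ to the subspace lattice of $X$, with $\rho(I)=X$; it is determined by subspaces $X_i=\rho(x_i)\subseteq Y_i=\rho(y_i)\subseteq X$. $\rho$ is decomposable if $X=X'\oplus X''$ with $X',X''\neq0$ and $\rho(a)=(\rho(a)\cap X')+(\rho(a)\cap X'')$ for all $a$. It is indecomposable if $X\ne0$ and it is not decomposable. An element $a\in D^{2,2,2}$ is perfect if $\rho(a)\in\{0,X\}$ for every indecomposable representation $\rho$ in a space $X$. *)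

theory Defs
  imports Complex_Main
begin

text \<open>Terms of the lattice D^{2,2,2}: generators x_i, y_i (i = 1,2,3), the adjoined
  greatest element I, joins and meets.  Elements of D^{2,2,2} are classes of such terms;
  every representation (lattice morphism into a subspace lattice, which is modular)
  evaluates terms compatibly with the defining relations, so we work with terms.\<close>

datatype lterm = Xg nat | Yg nat | Top | Join lterm lterm | Meet lterm lterm

fun wf_lterm :: "lterm \<Rightarrow> bool" where
  "wf_lterm (Xg i) = (i \<in> {1,2,3})"
| "wf_lterm (Yg i) = (i \<in> {1,2,3})"
| "wf_lterm Top = True"
| "wf_lterm (Join a b) = (wf_lterm a \<and> wf_lterm b)"
| "wf_lterm (Meet a b) = (wf_lterm a \<and> wf_lterm b)"

definition ssum :: "'v::ab_group_add set \<Rightarrow> 'v set \<Rightarrow> 'v set" where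
  "ssum A B = {a + b | a b. a \<in> A \<and> b \<in> B}"

fun rep_eval :: "'v::ab_group_add set \<Rightarrow> (nat \<Rightarrow> 'v set) \<Rightarrow> (nat \<Rightarrow> 'v set) \<Rightarrow> lterm \<Rightarrow> 'v set" where
  "rep_eval X Xs Ys (Xg i) = Xs i"
| "rep_eval X Xs Ys (Yg i) = Ys i"
| "rep_eval X Xs Ys Top = X"
| "rep_eval X Xs Ys (Join a b) = ssum (rep_eval X Xs Ys a) (rep_eval X Xs Ys b)"
| "rep_eval X Xs Ys (Meet a b) = rep_eval X Xs Ys a \<inter> rep_eval X Xs Ys b"

definition is_rep :: "('k::field \<Rightarrow> 'v::ab_group_add \<Rightarrow> 'v) \<Rightarrow> 'v set \<Rightarrow> (nat \<Rightarrow> 'v set) \<Rightarrow> (nat \<Rightarrow> 'v set) \<Rightarrow> bool" where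
  "is_rep scale X Xs Ys \<longleftrightarrow>
     module.subspace scale X \<and>
     (\<exists>B. finite B \<and> B \<subseteq> X \<and> module.span scale B = X) \<and>
     (\<forall>i\<in>{1,2,3}. module.subspace scale (Xs i) \<and> module.subspace scale (Ys i) \<and>
                    Xs i \<subseteq> Ys i \<and> Ys i \<subseteq> X)"

definition decomposable :: "('k::field \<Rightarrow> 'v::ab_group_add \<Rightarrow> 'v) \<Rightarrow> 'v set \<Rightarrow> (nat \<Rightarrow> 'v set) \<Rightarrow> (nat \<Rightarrow> 'v set) \<Rightarrow> bool" where
  "decomposable scale X Xs Ys \<longleftrightarrow>
     (\<exists>X' X''. module.subspace scale X' \<and> module.subspace scale X'' \<and>
        X' \<inter> X'' = {0} \<and> ssum X' X'' = X \<and> X' \<noteq> {0} \<and> X'' \<noteq> {0} \<and>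
        (\<forall>a. wf_lterm a \<longrightarrow>
            rep_eval X Xs Ys a = ssum (rep_eval X Xs Ys a \<inter> X') (rep_eval X Xs Ys a \<inter> X'')))"

definition indecomposable :: "('k::field \<Rightarrow> 'v::ab_group_add \<Rightarrow> 'v) \<Rightarrow> 'v set \<Rightarrow> (nat \<Rightarrow> 'v set) \<Rightarrow> (nat \<Rightarrow> 'v set) \<Rightarrow> bool" where
  "indecomposable scale X Xs Ys \<longleftrightarrow> X \<noteq> {0} \<and> \<not> decomposable scale X Xs Ys"

text \<open>Perfect element (relative to the given field and ambient space type, which are
  universally quantified as type variables in the theorem).\<close>
definition perfect :: "('k::field \<Rightarrow> 'v::ab_group_add \<Rightarrow> 'v) \<Rightarrow> lterm \<Rightarrow> bool" where
  "perfect scale a \<longleftrightarrow>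
     (\<forall>X Xs Ys. is_rep scale X Xs Ys \<and> indecomposable scale X Xs Ys \<longrightarrow>
        rep_eval X Xs Ys a \<in> {{0}, X})"

end

theory Submission
  imports Defs
begin

definition spl :: "'v::ab_group_add set \<Rightarrow> 'v set \<Rightarrow> 'v set \<Rightarrow> bool" where
  "spl A P Q \<longleftrightarrow> A \<subseteq> ssum (A \<inter> P) (A \<inter> Q)"

context vector_space begin

lemma ssum_subspace: "subspace A \<Longrightarrow> subspace B \<Longrightarrow> subspace (ssum A B)"
  unfolding ssum_def by (rule subspace_sums)

lemma complement_exists:
  assumes U: "subspace U" and V: "subspace V" and UV: "U \<subseteq> V" and F: "finite F" and VF: "V \<subseteq> span F"
  obtains C where "subspace C" "C \<subseteq> V" "U \<inter> C = {0}" "ssum U C = V"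
proof -
  obtain B where B: "B \<subseteq> U" "independent B" "U \<subseteq> span B"
    using maximal_independent_subset[of U] by blast
  obtain B' where B': "B \<subseteq> B'" "B' \<subseteq> V" "independent B'" "V \<subseteq> span B'"
    using maximal_independent_subset_extend[of B V] B UV by blast
  have finB': "finite B'" using independent_span_bound[OF F B'(3)] B'(2) VF by blast
  have finB: "finite B" using finB' B'(1) finite_subset by blast
  have spB: "span B = U" using span_subspace[OF B(1) B(3) U] .
  define C where "C = span (B' - B)"
  have sC: "subspace C" unfolding C_def by simp
  have CV: "C \<subseteq> V" unfolding C_def using span_minimal[of "B' - B" V] B'(2) V by blast
  have sum1: "ssum U C = V"
  proof
    show "ssum U C \<subseteq> V" using UV CV V unfolding ssum_def by (auto intro: subspace_add)
    have "span B' = span (B \<union> (B' - B))" using B'(1) by (simp add: Un_absorb1)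
    also have "\<dots> = ssum U C" unfolding span_Un ssum_def spB C_def by simp
    finally show "V \<subseteq> ssum U C" using B'(4) by simp
  qed
  have int: "U \<inter> C = {0}"
  proof
    show "{0} \<subseteq> U \<inter> C" using U sC by (simp add: subspace_0)
    show "U \<inter> C \<subseteq> {0}"
    proof
      fix x assume x: "x \<in> U \<inter> C"
      obtain u where u: "x = (\<Sum>v\<in>B. u v *s v)" using x spB span_finite[OF finB] by auto
      have finD: "finite (B' - B)" using finB' by simp
      obtain w where w: "x = (\<Sum>v\<in>B' - B. w v *s v)" using x span_finite[OF finD] unfolding C_def by auto
      define c where "c v = (if v \<in> B then u v else - w v)" for v
      have "(\<Sum>v\<in>B'. c v *s v) = (\<Sum>v\<in>B. c v *s v) + (\<Sum>v\<in>B' - B. c v *s v)"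
        using sum.subset_diff[OF B'(1) finB'] by (simp add: add.commute)
      also have "(\<Sum>v\<in>B. c v *s v) = x" unfolding u c_def by simp
      also have "(\<Sum>v\<in>B' - B. c v *s v) = - x" unfolding w c_def
        by (simp add: sum_negf[symmetric])
      finally have "(\<Sum>v\<in>B'. c v *s v) = 0" by simp
      then have "\<forall>v\<in>B'. c v = 0" using independentD[OF B'(3) finB' subset_refl] by blast
      then have "\<forall>v\<in>B. u v = 0" using B'(1) unfolding c_def by (metis (full_types) in_mono)
      then show "x \<in> {0}" unfolding u by simp
    qed
  qed
  show ?thesis using that sC CV int sum1 by blast
qed



lemma ssum_mono: "A \<subseteq> A' \<Longrightarrow> B \<subseteq> B' \<Longrightarrow> ssum A B \<subseteq> ssum A' B'"
  unfolding ssum_def by blast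

lemma ssum_sub: "subspace A \<Longrightarrow> P \<subseteq> A \<Longrightarrow> Q \<subseteq> A \<Longrightarrow> ssum P Q \<subseteq> A"
  unfolding ssum_def by (auto intro: subspace_add)

lemma ssum_left: "subspace B \<Longrightarrow> A \<subseteq> ssum A B"
  unfolding ssum_def using subspace_0 by force

lemma ssum_right: "subspace A \<Longrightarrow> B \<subseteq> ssum A B"
  unfolding ssum_def using subspace_0 by force

lemma spl_eq: "subspace A \<Longrightarrow> spl A P Q \<Longrightarrow> A = ssum (A \<inter> P) (A \<inter> Q)"
  unfolding spl_def using ssum_sub[of A "A \<inter> P" "A \<inter> Q"] by blast

lemma spl_left: "subspace A \<Longrightarrow> subspace Q \<Longrightarrow> A \<subseteq> P \<Longrightarrow> spl A P Q"
  unfolding spl_def ssum_def using subspace_0 by (force intro: exI[of _ 0])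

lemma spl_by: "A \<subseteq> ssum U W \<Longrightarrow> U \<subseteq> A \<inter> P \<Longrightarrow> W \<subseteq> A \<inter> Q \<Longrightarrow> spl A P Q"
  unfolding spl_def using ssum_mono[of U "A \<inter> P" W "A \<inter> Q"] by blast

lemma spl_terms:
  assumes sX: "subspace X" and sP: "subspace P" and sQ: "subspace Q"
    and PQ: "P \<inter> Q = {0}" and PQX: "ssum P Q = X"
    and gen: "\<And>l. l \<in> {1,2,3} \<Longrightarrow> subspace (Xs l) \<and> subspace (Ys l) \<and> Xs l \<subseteq> X \<and> Ys l \<subseteq> X
               \<and> spl (Xs l) P Q \<and> spl (Ys l) P Q"
  shows "wf_lterm a \<Longrightarrow> subspace (rep_eval X Xs Ys a) \<and> rep_eval X Xs Ys a \<subseteq> X \<and> spl (rep_eval X Xs Ys a) P Q"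
proof (induction a)
  case (Xg x)
  then show ?case using gen by simp
next
  case (Yg x)
  then show ?case using gen by simp
next
  case Top
  have "P \<subseteq> X" "Q \<subseteq> X" using PQX ssum_left[OF sQ] ssum_right[OF sP] by auto
  then have "X \<inter> P = P" "X \<inter> Q = Q" by auto
  then show ?case using sX PQX unfolding spl_def by simp
next
  case (Join a b)
  let ?A = "rep_eval X Xs Ys a" and ?B = "rep_eval X Xs Ys b"
  have A: "subspace ?A" "?A \<subseteq> X" "spl ?A P Q" and B: "subspace ?B" "?B \<subseteq> X" "spl ?B P Q"
    using Join by auto
  have s: "subspace (ssum ?A ?B)" using ssum_subspace A B by blast
  have sub: "ssum ?A ?B \<subseteq> X" using ssum_sub[OF sX] A B by blast
  have "spl (ssum ?A ?B) P Q"
    unfolding spl_def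
  proof
    fix v assume "v \<in> ssum ?A ?B"
    then obtain a b where v: "v = a + b" "a \<in> ?A" "b \<in> ?B" unfolding ssum_def by blast
    obtain a1 a2 where a: "a = a1 + a2" "a1 \<in> ?A \<inter> P" "a2 \<in> ?A \<inter> Q"
      using A(3) v(2) unfolding spl_def ssum_def by blast
    obtain b1 b2 where b: "b = b1 + b2" "b1 \<in> ?B \<inter> P" "b2 \<in> ?B \<inter> Q"
      using B(3) v(3) unfolding spl_def ssum_def by blast
    have "a1 + b1 \<in> ssum ?A ?B \<inter> P" using a b sP unfolding ssum_def by (auto intro: subspace_add)
    moreover have "a2 + b2 \<in> ssum ?A ?B \<inter> Q" using a b sQ unfolding ssum_def by (auto intro: subspace_add)
    moreover have "v = (a1 + b1) + (a2 + b2)" using v a b by (simp add: algebra_simps)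
    ultimately show "v \<in> ssum (ssum ?A ?B \<inter> P) (ssum ?A ?B \<inter> Q)" unfolding ssum_def by blast
  qed
  then show ?case using s sub by simp
next
  case (Meet a b)
  let ?A = "rep_eval X Xs Ys a" and ?B = "rep_eval X Xs Ys b"
  have A: "subspace ?A" "?A \<subseteq> X" "spl ?A P Q" and B: "subspace ?B" "?B \<subseteq> X" "spl ?B P Q"
    using Meet by auto
  have s: "subspace (?A \<inter> ?B)" using subspace_inter A B by blast
  have "spl (?A \<inter> ?B) P Q"
    unfolding spl_def
  proof
    fix v assume v: "v \<in> ?A \<inter> ?B"
    obtain a1 a2 where a: "v = a1 + a2" "a1 \<in> ?A \<inter> P" "a2 \<in> ?A \<inter> Q"
      using A(3) v unfolding spl_def ssum_def by blast
    obtain b1 b2 where b: "v = b1 + b2" "b1 \<in> ?B \<inter> P" "b2 \<in> ?B \<inter> Q"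
      using B(3) v unfolding spl_def ssum_def by blast
    have "a1 - b1 = b2 - a2" using a b by (simp add: algebra_simps)
    moreover have "a1 - b1 \<in> P" using a b sP by (auto intro: subspace_diff)
    moreover have "b2 - a2 \<in> Q" using a b sQ by (auto intro: subspace_diff)
    ultimately have "a1 - b1 \<in> P \<inter> Q" by simp
    then have "a1 - b1 = 0" using PQ by blast
    then have "a1 = b1" by simp
    moreover have "a2 = b2" using \<open>a1 = b1\<close> a b by simp
    ultimately show "v \<in> ssum (?A \<inter> ?B \<inter> P) (?A \<inter> ?B \<inter> Q)" using a b unfolding ssum_def by blast
  qed
  then show ?case using s A B by auto
qed

lemma decomp_intro:
  assumes sX: "subspace X" and sP: "subspace P" and sQ: "subspace Q"
    and PQ: "P \<inter> Q = {0}" and PQX: "ssum P Q = X" and P0: "P \<noteq> {0}" and Q0: "Q \<noteq> {0}"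
    and gen: "\<And>l. l \<in> {1,2,3} \<Longrightarrow> subspace (Xs l) \<and> subspace (Ys l) \<and> Xs l \<subseteq> X \<and> Ys l \<subseteq> X
               \<and> spl (Xs l) P Q \<and> spl (Ys l) P Q"
  shows "decomposable scale X Xs Ys"
  unfolding decomposable_def
proof (intro exI conjI allI impI)
  fix a assume "wf_lterm a"
  then have "subspace (rep_eval X Xs Ys a) \<and> rep_eval X Xs Ys a \<subseteq> X \<and> spl (rep_eval X Xs Ys a) P Q"
    using spl_terms[OF sX sP sQ PQ PQX, of Xs Ys a] gen by blast
  then show "rep_eval X Xs Ys a = ssum (rep_eval X Xs Ys a \<inter> P) (rep_eval X Xs Ys a \<inter> Q)"
    using spl_eq by blast
qed (fact sP sQ PQ PQX P0 Q0)+


lemma finish: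
  assumes rep: "is_rep scale X Xs Ys"
    and ijk: "i \<in> {1,2,3}" "j \<in> {1,2,3}" "k \<in> {1,2,3}" "k \<noteq> i" "k \<noteq> j" "i \<noteq> j"
    and SP: "ssum (Ys i) (Ys j) \<subseteq> P" and sP: "subspace P" and sQ: "subspace Q"
    and PQ: "P \<inter> Q = {0}" and PQX: "ssum P Q = X" and P0: "P \<noteq> {0}" and Q0: "Q \<noteq> {0}"
    and sk: "spl (Xs k) P Q" "spl (Ys k) P Q"
  shows "decomposable scale X Xs Ys"
proof (rule decomp_intro[OF _ sP sQ PQ PQX P0 Q0])
  show sX: "subspace X" using rep unfolding is_rep_def by blast
  fix l :: nat assume l: "l \<in> {1,2,3}"
  have g: "subspace (Xs l) \<and> subspace (Ys l) \<and> Xs l \<subseteq> Ys l \<and> Ys l \<subseteq> X"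
    using rep l unfolding is_rep_def by blast
  have gi: "subspace (Ys i)" "subspace (Ys j)" using rep ijk(1,2) unfolding is_rep_def by blast+
  have "spl (Xs l) P Q \<and> spl (Ys l) P Q"
  proof (cases "l = k")
    case True then show ?thesis using sk by simp
  next
    case False
    then have "l = i \<or> l = j" using ijk l by fastforce
    then have "Ys l \<subseteq> P" using SP ssum_left[OF gi(2)] ssum_right[OF gi(1)] by blast
    then show ?thesis using g spl_left[OF _ sQ] by blast
  qed
  then show "subspace (Xs l) \<and> subspace (Ys l) \<and> Xs l \<subseteq> X \<and> Ys l \<subseteq> X \<and> spl (Xs l) P Q \<and> spl (Ys l) P Q"
    using g by blast
qed

lemma main_vs:
  assumes rep: "is_rep scale X Xs Ys" and ind: "indecomposable scale X Xs Ys"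
    and ij: "i \<in> {1,2,3}" "j \<in> {1,2,3}" "i \<noteq> j"
  shows "ssum (Ys i) (Ys j) \<in> {{0}, X}"
proof (rule ccontr)
  define S where "S = ssum (Ys i) (Ys j)"
  assume "ssum (Ys i) (Ys j) \<notin> {{0}, X}"
  then have S0: "S \<noteq> {0}" and SX: "S \<noteq> X" unfolding S_def by auto
  define k where "k = 6 - i - j"
  have k: "k \<in> {1,2,3}" "k \<noteq> i" "k \<noteq> j" using ij unfolding k_def by auto
  have sX: "subspace X" using rep unfolding is_rep_def by blast
  obtain F where F: "finite F" "span F = X" using rep unfolding is_rep_def by blast
  have gen: "\<And>l. l \<in> {1,2,3} \<Longrightarrow> subspace (Xs l) \<and> subspace (Ys l) \<and> Xs l \<subseteq> Ys l \<and> Ys l \<subseteq> X"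
    using rep unfolding is_rep_def by blast
  have gi: "subspace (Ys i)" "Ys i \<subseteq> X" using gen[OF ij(1)] by simp_all
  have gj: "subspace (Ys j)" "Ys j \<subseteq> X" using gen[OF ij(2)] by simp_all
  have sS: "subspace S" unfolding S_def by (rule ssum_subspace[OF gi(1) gj(1)])
  have SsubX: "S \<subseteq> X" unfolding S_def by (rule ssum_sub[OF sX gi(2) gj(2)])
  have gk: "subspace (Xs k) \<and> subspace (Ys k) \<and> Xs k \<subseteq> Ys k \<and> Ys k \<subseteq> X" using gen[OF k(1)] .
  have sXk: "subspace (Xs k)" and sYk: "subspace (Ys k)" and XY: "Xs k \<subseteq> Ys k" and YX: "Ys k \<subseteq> X"
    using gk by simp_all
  have XF: "X \<subseteq> span F" using F(2) by simp
  have nd: "\<not> decomposable scale X Xs Ys" using ind unfolding indecomposable_def by blast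
  note fin = finish[OF rep ij(1,2) k(1,2,3) ij(3), folded S_def]
  show False
  proof (cases "ssum S (Ys k) = X")
    case False
    define T where "T = ssum S (Ys k)"
    have sT: "subspace T" unfolding T_def using ssum_subspace sS sYk by blast
    have TX: "T \<subseteq> X" unfolding T_def using ssum_sub[OF sX SsubX YX] .
    obtain C where C: "subspace C" "C \<subseteq> X" "T \<inter> C = {0}" "ssum T C = X"
      using complement_exists[OF sT sX TX F(1) XF] by blast
    have ST: "S \<subseteq> T" unfolding T_def using ssum_left[OF sYk] .
    have YT: "Ys k \<subseteq> T" unfolding T_def using ssum_right[OF sS] .
    have T0: "T \<noteq> {0}"
    proof
      assume "T = {0}"
      then have "S \<subseteq> {0}" using ST by simp
      then have "S = {0}" using subspace_0[OF sS] by blast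
      then show False using S0 by simp
    qed
    have C0: "C \<noteq> {0}"
    proof
      assume "C = {0}"
      then have "ssum T C = T" unfolding ssum_def by simp
      then show False using C(4) False T_def by simp
    qed
    have XT: "Xs k \<subseteq> T" using XY YT by blast
    have "decomposable scale X Xs Ys"
      by (rule fin[OF ST sT C(1,3,4) T0 C0 spl_left[OF sXk C(1) XT] spl_left[OF sYk C(1) YT]])
    then show False using nd by simp
  next
    case SYX: True
    show False
    proof (cases "ssum S (Xs k) = X")
      case False
      define W where "W = ssum (Xs k) (S \<inter> Ys k)"
      define P where "P = ssum S (Xs k)"
      have sW: "subspace W" unfolding W_def using ssum_subspace subspace_inter sXk sS sYk by blast
      have WY: "W \<subseteq> Ys k" unfolding W_def using ssum_sub[OF sYk] XY by blast
      have YF: "Ys k \<subseteq> span F" using YX F(2) by simp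
      obtain C where C: "subspace C" "C \<subseteq> Ys k" "W \<inter> C = {0}" "ssum W C = Ys k"
        using complement_exists[OF sW sYk WY F(1) YF] by blast
      have sP: "subspace P" unfolding P_def using ssum_subspace sS sXk by blast
      have SP: "S \<subseteq> P" unfolding P_def using ssum_left[OF sXk] .
      have XP: "Xs k \<subseteq> P" unfolding P_def using ssum_right[OF sS] .
      have WP: "W \<subseteq> P"
      proof
        fix v assume "v \<in> W"
        then obtain x t where "v = x + t" "x \<in> Xs k" "t \<in> S" unfolding W_def ssum_def by blast
        then have "v = t + x" "t \<in> S" "x \<in> Xs k" by (simp_all add: add.commute)
        then show "v \<in> P" unfolding P_def ssum_def by blast
      qed
      have P0: "P \<noteq> {0}"
    proof
      assume "P = {0}"
      then have "S \<subseteq> {0}" using SP by simp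
      then have "S = {0}" using subspace_0[OF sS] by blast
      then show False using S0 by simp
    qed
      have PC: "P \<inter> C = {0}"
      proof
        show "{0} \<subseteq> P \<inter> C" using sP C(1) subspace_0 by blast
        show "P \<inter> C \<subseteq> {0}"
        proof
          fix v assume v: "v \<in> P \<inter> C"
          then obtain s x where sx: "v = s + x" "s \<in> S" "x \<in> Xs k" unfolding P_def ssum_def by blast
          have "v \<in> Ys k" using v C(2) by blast
          then have "s \<in> Ys k" using sx XY sYk subspace_diff[of "Ys k" v x] by auto
          then have "s \<in> S \<inter> Ys k" using sx by blast
          moreover have "v = x + s" using sx by (simp add: add.commute)
          ultimately have "v \<in> W" unfolding W_def ssum_def using sx by blast
          then show "v \<in> {0}" using v C(3) by blast
        qed
      qed
      have PCX: "ssum P C = X"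
      proof
        have "P \<subseteq> X" unfolding P_def using ssum_sub[OF sX SsubX] XY YX by blast
        then show "ssum P C \<subseteq> X" using ssum_sub[OF sX] C(2) YX by blast
        show "X \<subseteq> ssum P C"
        proof
          fix v assume "v \<in> X"
          then obtain s y where sy: "v = s + y" "s \<in> S" "y \<in> Ys k" using SYX unfolding ssum_def by blast
          then obtain w c where wc: "y = w + c" "w \<in> W" "c \<in> C" using C(4) unfolding ssum_def by blast
          have "s + w \<in> P" using sy wc SP WP sP subspace_add by blast
          moreover have "v = (s + w) + c" using sy wc by (simp add: add.assoc)
          ultimately show "v \<in> ssum P C" using wc unfolding ssum_def by blast
        qed
      qed
      have C0: "C \<noteq> {0}"
      proof
        assume "C = {0}"
        then have "W = Ys k" using C(4) unfolding ssum_def by simp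
        then have "Ys k \<subseteq> P" using WP by simp
        then have YP: "ssum S (Ys k) \<subseteq> P" using ssum_sub[OF sP SP] by simp
        have XP': "X \<subseteq> P" using YP unfolding SYX .
        have XkX: "Xs k \<subseteq> X" using XY YX by (rule order_trans)
        have PX: "P \<subseteq> X" unfolding P_def by (rule ssum_sub[OF sX SsubX XkX])
        have "P = X" using XP' PX by (rule equalityI[rotated])
        then have "ssum S (Xs k) = X" unfolding P_def .
        with False show False by contradiction
      qed
      have a1: "Ys k \<subseteq> ssum W C" using C(4) by simp
      have a2: "W \<subseteq> Ys k \<inter> P" using WY WP by blast
      have a3: "C \<subseteq> Ys k \<inter> C" using C(2) by blast
      have spY: "spl (Ys k) P C" by (rule spl_by[OF a1 a2 a3])
      have "decomposable scale X Xs Ys"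
        by (rule fin[OF SP sP C(1) PC PCX P0 C0 spl_left[OF sXk C(1) XP] spY])
      then show False using nd by simp
    next
      case SXX: True
      have XSX: "Xs k \<inter> S \<subseteq> Xs k" by blast
      have XF: "Xs k \<subseteq> span F" using XY YX F(2) by blast
      obtain C where C: "subspace C" "C \<subseteq> Xs k" "(Xs k \<inter> S) \<inter> C = {0}" "ssum (Xs k \<inter> S) C = Xs k"
        using complement_exists[OF subspace_inter[OF sXk sS] sXk XSX F(1) XF] by blast
      have SC: "S \<inter> C = {0}"
      proof
        show "{0} \<subseteq> S \<inter> C" using sS C(1) subspace_0 by blast
        show "S \<inter> C \<subseteq> {0}" using C(2,3) by blast
      qed
      have SCX: "ssum S C = X"
      proof
        show "ssum S C \<subseteq> X" using ssum_sub[OF sX SsubX] C(2) XY YX by blast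
        show "X \<subseteq> ssum S C"
        proof
          fix v assume "v \<in> X"
          then obtain s x where sx: "v = s + x" "s \<in> S" "x \<in> Xs k" using SXX unfolding ssum_def by blast
          then obtain t c where tc: "x = t + c" "t \<in> S" "c \<in> C" using C(4) unfolding ssum_def by blast
          have "s + t \<in> S" using sx tc sS subspace_add by blast
          moreover have "v = (s + t) + c" using sx tc by (simp add: add.assoc)
          ultimately show "v \<in> ssum S C" using tc unfolding ssum_def by blast
        qed
      qed
      have C0: "C \<noteq> {0}"
      proof
        assume "C = {0}"
        then have "ssum (Xs k \<inter> S) C = Xs k \<inter> S" unfolding ssum_def by auto
        then have XS: "Xs k \<subseteq> S" using C(4) by blast
        have "X \<subseteq> S" using SXX ssum_sub[OF sS subset_refl XS] by simp
        then show False using SX SsubX by blast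
      qed
      have b1: "Xs k \<subseteq> ssum (Xs k \<inter> S) C" using C(4) by simp
      have b2: "Xs k \<inter> S \<subseteq> Xs k \<inter> S" by blast
      have b3: "C \<subseteq> Xs k \<inter> C" using C(2) by blast
      have spX: "spl (Xs k) S C" by (rule spl_by[OF b1 b2 b3])
      have spY: "spl (Ys k) S C"
        unfolding spl_def
      proof
        fix v assume v: "v \<in> Ys k"
        then have "v \<in> X" using YX by blast
        then obtain s c where sc: "v = s + c" "s \<in> S" "c \<in> C" using SCX unfolding ssum_def by blast
        have "c \<in> Ys k" using sc C(2) XY by blast
        have "s = v - c" using sc(1) by simp
        then have "s \<in> Ys k" using subspace_diff[OF sYk v \<open>c \<in> Ys k\<close>] by simp
        then show "v \<in> ssum (Ys k \<inter> S) (Ys k \<inter> C)" using sc \<open>c \<in> Ys k\<close> unfolding ssum_def by blast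
      qed
      have "decomposable scale X Xs Ys"
        by (rule fin[OF subset_refl sS C(1) SC SCX S0 C0 spX spY])
      then show False using nd by simp
    qed
  qed
qed

end

theorem mainTheorem12:
  fixes scale :: "'k::field \<Rightarrow> 'v::ab_group_add \<Rightarrow> 'v"
    and i j :: nat
  assumes "vector_space scale"
    and "i \<in> {1,2,3}" and "j \<in> {1,2,3}" and "i \<noteq> j"
  shows "perfect scale (Join (Yg i) (Yg j))"
proof -
  interpret vector_space scale by fact
  show ?thesis unfolding perfect_def
  proof (intro allI impI)
    fix X Xs Ys assume "is_rep scale X Xs Ys \<and> indecomposable scale X Xs Ys"
    then show "rep_eval X Xs Ys (Join (Yg i) (Yg j)) \<in> {{0}, X}"
      using main_vs[of X Xs Ys i j] assms(2-4) by simp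
  qed
qed

end
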